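(* Let $K=3m$ with $m\ge 3$ and suppose $t=KM/N=K-3$. Then the D2D coded caching rate $R=N/M-1$ is achievable with subpacketization $$F=\frac{2K(K-3)(K-3/2)}{3}=9m(m-1)(2m-1).$$
   Context: D2D coded caching setting: there are $N\ge 1$ files $W_1,\dots,W_N$ and $K\ge 2$ users, each with a cache of size $M$ files, $0<M\le N$, and $t:=KM/N$ is assumed to be a positive integer. A D2D coded caching scheme with (uncoded placement and) subpacketization $F\in\mathbb{N}_+$ is defined as follows. Fix a packet size $b\ge 1$; each file is a sequence of $F$ packets $W_n=(W_n^{(1)},\dots,W_n^{(F)})$, $W_n^{(j)}\in\{0,1\}^b$. Placement: each user $k\in[K]$ stores the packets $\{W_n^{(j)}:(n,j)\in Z_k\}$ for a fixed index set $Z_k\subseteq[N]\times[F]$ with $|Z_k|\le MF$ (independent of demands and file contents). Delivery: for every demand vector $\mathbf d=(d_1,\dots,d_K)\in[N]^K$, each user $k$ broadcasts to all other users $\ell_k(\mathbf d)\in\mathbb{N}$ blocks in $\{0,1\}^b$, each a deterministic function of the packets stored by user $k$; it is required that for all file contents each user $k$ can recover all $F$ packets of $W_{d_k}$ from its stored packets and the blocks sent by the other users. The rate is $R=\max_{\mathbf d}\frac{1}{F}\sum_{k=1}^K\ell_k(\mathbf d)$ (transmitted bits normalized by the file size $Fb$). The rate $R$ is achievable with subpacketization $F$ if such a scheme with rate $R$ exists for every packet size $b\ge 1$. *)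

theory Defs
  imports Complex_Main "HOL-Library.FuncSet"
begin

text \<open>A file library is W :: nat \<times> nat \<Rightarrow> bool list, W (n,j) being packet j of file n;
  it is valid for packet size b if every packet W (n,j), n in [N], j in [F], has length b.\<close>

definition valid_library :: "nat \<Rightarrow> nat \<Rightarrow> nat \<Rightarrow> (nat \<times> nat \<Rightarrow> bool list) \<Rightarrow> bool" where
  "valid_library N F b W \<longleftrightarrow> (\<forall>n\<in>{1..N}. \<forall>j\<in>{1..F}. length (W (n, j)) = b)"

definition stored :: "(nat \<times> nat) set \<Rightarrow> (nat \<times> nat \<Rightarrow> bool list) \<Rightarrow> (nat \<times> nat \<Rightarrow> bool list)" where
  "stored Z W = (\<lambda>x. if x \<in> Z then W x else [])"

definition demands :: "nat \<Rightarrow> nat \<Rightarrow> (nat \<Rightarrow> nat) set" where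
  "demands N K = {1..K} \<rightarrow>\<^sub>E {1..N}"

text \<open>A D2D coded caching scheme with N files, K users, cache size M, subpacketization F,
  packet size b and rate R. Z k: placement index set of user k; l k d: number of blocks
  broadcast by user k for demand d; enc k d: the broadcast blocks, a deterministic function of
  the packets stored by user k; dec k d: the decoder of user k, a function of its stored
  packets and the blocks sent by the other users.\<close>
definition d2d_scheme :: "nat \<Rightarrow> nat \<Rightarrow> real \<Rightarrow> nat \<Rightarrow> nat \<Rightarrow> real \<Rightarrow> bool" where
  "d2d_scheme N K M F b R \<longleftrightarrow>
    (\<exists>(Z :: nat \<Rightarrow> (nat \<times> nat) set)
      (l :: nat \<Rightarrow> (nat \<Rightarrow> nat) \<Rightarrow> nat)
      (enc :: nat \<Rightarrow> (nat \<Rightarrow> nat) \<Rightarrow> (nat \<times> nat \<Rightarrow> bool list) \<Rightarrow> bool list list)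
      (dec :: nat \<Rightarrow> (nat \<Rightarrow> nat) \<Rightarrow> (nat \<times> nat \<Rightarrow> bool list) \<Rightarrow> (nat \<Rightarrow> bool list list) \<Rightarrow> nat \<Rightarrow> bool list).
      (\<forall>k\<in>{1..K}. Z k \<subseteq> {1..N} \<times> {1..F} \<and> real (card (Z k)) \<le> M * real F) \<and>
      (\<forall>d\<in>demands N K. \<forall>W. valid_library N F b W \<longrightarrow>
         (\<forall>k\<in>{1..K}. length (enc k d (stored (Z k) W)) = l k d \<and>
                      (\<forall>blk\<in>set (enc k d (stored (Z k) W)). length blk = b)) \<and>
         (\<forall>k\<in>{1..K}. \<forall>j\<in>{1..F}.
            dec k d (stored (Z k) W)
              (\<lambda>k'. if k' \<in> {1..K} \<and> k' \<noteq> k then enc k' d (stored (Z k') W) else []) j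
            = W (d k, j))) \<and>
      R = Max {(\<Sum>k\<in>{1..K}. real (l k d)) / real F | d. d \<in> demands N K})"

definition achievable_with_subpacketization :: "nat \<Rightarrow> nat \<Rightarrow> real \<Rightarrow> real \<Rightarrow> nat \<Rightarrow> bool" where
  "achievable_with_subpacketization N K M R F \<longleftrightarrow>
     F \<ge> 1 \<and> (\<forall>b\<ge>1. d2d_scheme N K M F b R)"

end

theory Submission
  imports Defs "HOL-Library.Product_Lexorder"
begin

definition xorblk :: "nat \<Rightarrow> nat set \<Rightarrow> (nat \<Rightarrow> bool list) \<Rightarrow> bool list" where
  "xorblk b S f = map (\<lambda>i. odd (card {v\<in>S. f v ! i})) [0..<b]"

lemma xorblk_cong: "(\<And>v. v \<in> S \<Longrightarrow> f v = g v) \<Longrightarrow> xorblk b S f = xorblk b S g"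
  unfolding xorblk_def by (intro map_cong refl arg_cong[where f=odd] arg_cong[where f=card]) auto

lemma card_filter_remove:
  assumes "finite S" "v \<in> S"
  shows "card {x\<in>S. P x} = card {x\<in>S - {v}. P x} + (if P v then 1 else 0)"
proof (cases "P v")
  case True
  have "{x\<in>S. P x} = insert v {x\<in>S - {v}. P x}" using assms True by auto
  then show ?thesis using assms True by simp
next
  case False
  have "{x\<in>S. P x} = {x\<in>S - {v}. P x}" using assms False by auto
  then show ?thesis using False by simp
qed

lemma xorblk_decode:
  assumes "finite S" "v \<in> S" "length (f v) = b"
  shows "map (\<lambda>i. xorblk b S f ! i \<noteq> xorblk b (S - {v}) f ! i) [0..<b] = f v"
proof -
  have "map (\<lambda>i. xorblk b S f ! i \<noteq> xorblk b (S - {v}) f ! i) [0..<b] = map (\<lambda>i. f v ! i) [0..<b]"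
  proof (rule map_cong[OF refl])
    fix i assume "i \<in> set [0..<b]"
    then have i: "i < b" by simp
    show "xorblk b S f ! i \<noteq> xorblk b (S - {v}) f ! i \<longleftrightarrow> f v ! i"
      using i card_filter_remove[OF assms(1,2), of "\<lambda>x. f x ! i"] unfolding xorblk_def by auto
  qed
  also have "\<dots> = f v" using assms(3) map_nth[of "f v"] by simp
  finally show ?thesis .
qed

lemma generic_scheme:
  fixes L :: "'p set" and miss :: "'p \<Rightarrow> nat set" and e :: "'p \<Rightarrow> nat"
    and Tr :: "nat \<Rightarrow> 't::linorder set" and srv :: "nat \<Rightarrow> 't \<Rightarrow> nat set"
    and pk :: "nat \<Rightarrow> 't \<Rightarrow> nat \<Rightarrow> 'p" and lk :: nat
  assumes inj: "inj_on e L" and eL: "e ` L \<subseteq> {1..F}"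
    and Trf: "\<And>k. k \<in> {1..K} \<Longrightarrow> finite (Tr k) \<and> card (Tr k) \<le> lk"
    and V: "\<And>k \<tau> v. k \<in> {1..K} \<Longrightarrow> \<tau> \<in> Tr k \<Longrightarrow> v \<in> srv k \<tau> \<Longrightarrow>
              v \<in> {1..K} \<and> pk k \<tau> v \<in> L \<and> v \<in> miss (pk k \<tau> v) \<and> k \<notin> miss (pk k \<tau> v) \<and>
              (\<forall>v'\<in>srv k \<tau>. v' \<noteq> v \<longrightarrow> v \<notin> miss (pk k \<tau> v'))"
    and C: "\<And>v p. v \<in> {1..K} \<Longrightarrow> p \<in> L \<Longrightarrow> v \<in> miss p \<Longrightarrow>
              \<exists>k\<in>{1..K}. \<exists>\<tau>\<in>Tr k. v \<in> srv k \<tau> \<and> pk k \<tau> v = p"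
    and cache: "\<And>k. k \<in> {1..K} \<Longrightarrow> real N * (real F - real (card {p\<in>L. k \<in> miss p})) \<le> M * real F"
    and R: "R = real (K * lk) / real F"
    and N: "N \<ge> 1"
  shows "d2d_scheme N K M F b R"
proof -
  define Z where "Z k = {1..N} \<times> ({1..F} - e ` {p\<in>L. k \<in> miss p})" for k
  define l where "l (k::nat) (d :: nat \<Rightarrow> nat) = lk" for k d
  define txl where "txl k = sorted_list_of_set (Tr k)" for k
  define enc where "enc k d st = map (\<lambda>\<tau>. xorblk b (srv k \<tau>) (\<lambda>v. st (d v, e (pk k \<tau> v)))) (txl k)
      @ replicate (lk - card (Tr k)) (replicate b False)"
    for k and d :: "nat \<Rightarrow> nat" and st :: "nat \<times> nat \<Rightarrow> bool list"
  define dec where "dec v d st rcv j = (if \<exists>p\<in>L. e p = j \<and> v \<in> miss p then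
      (let p = (SOME p. p\<in>L \<and> e p = j \<and> v \<in> miss p);
           kt = (SOME kt. fst kt \<in> {1..K} \<and> snd kt \<in> Tr (fst kt) \<and> v \<in> srv (fst kt) (snd kt) \<and> pk (fst kt) (snd kt) v = p);
           k = fst kt; \<tau> = snd kt;
           idx = (SOME i. i < length (txl k) \<and> txl k ! i = \<tau>);
           blk = (rcv k :: bool list list) ! idx;
           rest = xorblk b (srv k \<tau> - {v}) (\<lambda>v'. st (d v', e (pk k \<tau> v')))
       in map (\<lambda>i. blk ! i \<noteq> rest ! i) [0..<b])
      else st (d v, j))"
    for v and d :: "nat \<Rightarrow> nat" and st :: "nat \<times> nat \<Rightarrow> bool list" and rcv j
  have srvK: "srv k \<tau> \<subseteq> {1..K}" if "k \<in> {1..K}" "\<tau> \<in> Tr k" for k \<tau>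
    using V[OF that] by blast
  have finsrv: "finite (srv k \<tau>)" if "k \<in> {1..K}" "\<tau> \<in> Tr k" for k \<tau>
    using srvK[OF that] finite_subset by blast
  have Zsub: "Z k \<subseteq> {1..N} \<times> {1..F}" for k unfolding Z_def by auto
  have cardZ: "real (card (Z k)) \<le> M * real F" if k: "k \<in> {1..K}" for k
  proof -
    have fin: "finite {p\<in>L. k \<in> miss p}"
      using finite_imageD[OF finite_subset[OF eL]] inj finite_subset[of "{p\<in>L. k \<in> miss p}" L] 
      by (metis (no_types, lifting) finite_atLeastAtMost inj_on_subset mem_Collect_eq subsetI)
    have sub: "e ` {p\<in>L. k \<in> miss p} \<subseteq> {1..F}" using eL by auto
    have ci: "card (e ` {p\<in>L. k \<in> miss p}) = card {p\<in>L. k \<in> miss p}"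
      by (rule card_image) (rule inj_on_subset[OF inj], auto)
    have "card (Z k) = N * (F - card {p\<in>L. k \<in> miss p})"
      unfolding Z_def card_cartesian_product using card_Diff_subset[OF finite_subset[OF sub] sub] ci by simp
    moreover have "card {p\<in>L. k \<in> miss p} \<le> F"
      using card_mono[OF _ sub] ci by simp
    ultimately show ?thesis using cache[OF k] by (simp add: of_nat_diff)
  qed
  have decode: "dec k d (stored (Z k) W)
              (\<lambda>k'. if k' \<in> {1..K} \<and> k' \<noteq> k then enc k' d (stored (Z k') W) else []) j
            = W (d k, j)"
    if d: "d \<in> demands N K" and W: "valid_library N F b W" and k: "k \<in> {1..K}" and j: "j \<in> {1..F}"
    for d W k j
  proof -
    have dk: "d x \<in> {1..N}" if "x \<in> {1..K}" for x using d that unfolding demands_def by auto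
    have lenW: "length (W (d x, j')) = b" if "x \<in> {1..K}" "j' \<in> {1..F}" for x j'
      using W dk[OF that(1)] that(2) unfolding valid_library_def by auto
    show ?thesis
    proof (cases "\<exists>p\<in>L. e p = j \<and> k \<in> miss p")
      case False
      then have "(d k, j) \<in> Z k" using dk[OF k] j inj unfolding Z_def by auto
      then show ?thesis unfolding dec_def if_not_P[OF False] stored_def by simp
    next
      case True
      define p where "p = (SOME p. p\<in>L \<and> e p = j \<and> k \<in> miss p)"
      have p: "p \<in> L \<and> e p = j \<and> k \<in> miss p" unfolding p_def by (rule someI_ex) (use True in blast)
      define kt where "kt = (SOME kt. fst kt \<in> {1..K} \<and> snd kt \<in> Tr (fst kt) \<and> k \<in> srv (fst kt) (snd kt) \<and> pk (fst kt) (snd kt) k = p)"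
      have kt: "fst kt \<in> {1..K} \<and> snd kt \<in> Tr (fst kt) \<and> k \<in> srv (fst kt) (snd kt) \<and> pk (fst kt) (snd kt) k = p"
        unfolding kt_def by (rule someI_ex) (use C[OF k, of p] p in auto)
      define s where "s = fst kt"
      define \<tau> where "\<tau> = snd kt"
      have s: "s \<in> {1..K}" and \<tau>: "\<tau> \<in> Tr s" and ks: "k \<in> srv s \<tau>" and pkk: "pk s \<tau> k = p"
        using kt unfolding s_def \<tau>_def by auto
      have Vs: "k \<in> {1..K} \<and> pk s \<tau> k \<in> L \<and> k \<in> miss (pk s \<tau> k) \<and> s \<notin> miss (pk s \<tau> k) \<and>
              (\<forall>v'\<in>srv s \<tau>. v' \<noteq> k \<longrightarrow> k \<notin> miss (pk s \<tau> v'))" using V[OF s \<tau> ks] .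
      have sk: "s \<noteq> k" using Vs by auto
      have finTr: "finite (Tr s)" using Trf[OF s] by simp
      define idx where "idx = (SOME i. i < length (txl s) \<and> txl s ! i = \<tau>)"
      have "\<tau> \<in> set (txl s)" unfolding txl_def using finTr \<tau> by simp
      then have idx: "idx < length (txl s) \<and> txl s ! idx = \<tau>"
        unfolding idx_def by (rule someI_ex[OF iffD1[OF in_set_conv_nth]]) 
      have encs: "enc s d (stored (Z s) W) ! idx = xorblk b (srv s \<tau>) (\<lambda>v. W (d v, e (pk s \<tau> v)))"
      proof -
        have "enc s d (stored (Z s) W) ! idx = xorblk b (srv s \<tau>) (\<lambda>v. stored (Z s) W (d v, e (pk s \<tau> v)))"
          unfolding enc_def using idx by (simp add: nth_append)
        also have "\<dots> = xorblk b (srv s \<tau>) (\<lambda>v. W (d v, e (pk s \<tau> v)))"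
        proof (rule xorblk_cong)
          fix v assume v: "v \<in> srv s \<tau>"
          have Vv: "v \<in> {1..K} \<and> pk s \<tau> v \<in> L \<and> v \<in> miss (pk s \<tau> v) \<and> s \<notin> miss (pk s \<tau> v)"
            using V[OF s \<tau> v] by blast
          have "(d v, e (pk s \<tau> v)) \<in> Z s"
            unfolding Z_def using Vv dk eL inj_onD[OF inj] by fastforce
          then show "stored (Z s) W (d v, e (pk s \<tau> v)) = W (d v, e (pk s \<tau> v))" unfolding stored_def by simp
        qed
        finally show ?thesis .
      qed
      have rest: "xorblk b (srv s \<tau> - {k}) (\<lambda>v'. stored (Z k) W (d v', e (pk s \<tau> v'))) =
                  xorblk b (srv s \<tau> - {k}) (\<lambda>v. W (d v, e (pk s \<tau> v)))"
      proof (rule xorblk_cong)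
        fix v assume v: "v \<in> srv s \<tau> - {k}"
        have Vv: "v \<in> {1..K} \<and> pk s \<tau> v \<in> L" using V[OF s \<tau>, of v] v by blast
        have "k \<notin> miss (pk s \<tau> v)" using Vs v by blast
        then have "(d k, e (pk s \<tau> v)) \<in> Z k \<or> True" by simp
        have "(d v, e (pk s \<tau> v)) \<in> Z k"
          unfolding Z_def using Vv dk eL inj_onD[OF inj] \<open>k \<notin> miss (pk s \<tau> v)\<close> by fastforce
        then show "stored (Z k) W (d v, e (pk s \<tau> v)) = W (d v, e (pk s \<tau> v))" unfolding stored_def by simp
      qed
      have "dec k d (stored (Z k) W)
              (\<lambda>k'. if k' \<in> {1..K} \<and> k' \<noteq> k then enc k' d (stored (Z k') W) else []) j
          = map (\<lambda>i. (if s \<in> {1..K} \<and> s \<noteq> k then enc s d (stored (Z s) W) else []) ! idx ! i \<noteq>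
               xorblk b (srv s \<tau> - {k}) (\<lambda>v'. stored (Z k) W (d v', e (pk s \<tau> v'))) ! i) [0..<b]"
        unfolding dec_def if_P[OF True] Let_def p_def[symmetric] kt_def[symmetric] s_def[symmetric]
          \<tau>_def[symmetric] idx_def[symmetric] ..
      also have "\<dots> = map (\<lambda>i. xorblk b (srv s \<tau>) (\<lambda>v. W (d v, e (pk s \<tau> v))) ! i \<noteq>
                      xorblk b (srv s \<tau> - {k}) (\<lambda>v. W (d v, e (pk s \<tau> v))) ! i) [0..<b]"
        using s sk by (simp only: encs rest if_True simp_thms)
      also have "\<dots> = W (d k, e (pk s \<tau> k))"
        by (rule xorblk_decode[where f="\<lambda>v. W (d v, e (pk s \<tau> v))"])
           (use finsrv[OF s \<tau>] ks lenW[OF k] p pkk eL in auto)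
      finally show ?thesis using pkk p by simp
    qed
  qed
  have lenenc: "length (enc k d st) = l k d \<and> (\<forall>blk\<in>set (enc k d st). length blk = b)"
    if k: "k \<in> {1..K}" for k d st
    using Trf[OF k] unfolding enc_def l_def txl_def xorblk_def by auto
  have dne: "demands N K \<noteq> {}"
  proof -
    have "(\<lambda>k. if k \<in> {1..K} then 1 else undefined) \<in> demands N K"
      unfolding demands_def using N by auto
    then show ?thesis by blast
  qed
  have Rmax: "R = Max {(\<Sum>k\<in>{1..K}. real (l k d)) / real F | d. d \<in> demands N K}"
  proof -
    have "{(\<Sum>k\<in>{1..K}. real (l k d)) / real F | d. d \<in> demands N K} = {real (K * lk) / real F}"
      using dne unfolding l_def by auto
    then show ?thesis using R by simp
  qed
  show ?thesis
    unfolding d2d_scheme_def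
    apply (rule exI[of _ Z], rule exI[of _ l], rule exI[of _ enc], rule exI[of _ dec])
    using Zsub cardZ decode lenenc Rmax by blast
qed

definition tri :: "nat \<Rightarrow> nat" where "tri u = (u - 1) div 3"
definition Dl :: "nat \<Rightarrow> nat set" where "Dl g = {3*g+1, 3*g+2, 3*g+3}"
definition UU :: "nat \<Rightarrow> nat set" where "UU m = {1..3*m}"
definition wt :: "nat set \<Rightarrow> nat" where
  "wt T = (if card (tri ` T) = 2 then 3 else if card (tri ` T) = 3 then 4 else 0)"
definition pos :: "nat set \<Rightarrow> nat \<Rightarrow> nat" where "pos S u = card {x\<in>S. x < u}"

lemma mem_Dl: "x \<in> Dl g \<longleftrightarrow> 1 \<le> x \<and> tri x = g"
  unfolding Dl_def tri_def by (auto; presburger)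

lemma card_Dl[simp]: "card (Dl g) = 3" and fin_Dl[simp]: "finite (Dl g)"
  unfolding Dl_def by auto

lemma mem_UU: "x \<in> UU m \<longleftrightarrow> 1 \<le> x \<and> tri x < m"
  unfolding UU_def tri_def by (auto; presburger)

lemma fin_UU[simp]: "finite (UU m)" and card_UU[simp]: "card (UU m) = 3*m"
  unfolding UU_def by auto

lemma Dl_sub: "g < m \<Longrightarrow> Dl g \<subseteq> UU m"
  by (auto simp: mem_Dl mem_UU)

lemma card_UU_Dl: "g < m \<Longrightarrow> card (UU m - Dl g) = 3*m - 3"
  by (simp add: card_Diff_subset Dl_sub)

lemma self_Dl: "1 \<le> u \<Longrightarrow> u \<in> Dl (tri u)"
  by (simp add: mem_Dl)

lemma pos_bij: assumes "finite S" shows "bij_betw (pos S) S {..<card S}"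
proof -
  have lt: "pos S x < pos S y" if "x \<in> S" "y \<in> S" "x < y" for x y
  proof -
    have "{z\<in>S. z < x} \<subset> {z\<in>S. z < y}" using that by auto
    then show ?thesis unfolding pos_def by (rule psubset_card_mono[rotated]) (use assms in auto)
  qed
  have inj: "inj_on (pos S) S"
    by (rule inj_onI) (metis lt linorder_neqE_nat less_irrefl)
  have sub: "pos S ` S \<subseteq> {..<card S}"
  proof
    fix y assume "y \<in> pos S ` S"
    then obtain x where x: "x \<in> S" "y = pos S x" by auto
    have "{z\<in>S. z < x} \<subset> S" using x by auto
    then show "y \<in> {..<card S}" using x assms unfolding pos_def by (simp add: psubset_card_mono)
  qed
  have "card (pos S ` S) = card {..<card S}" using card_image[OF inj] by simp
  then have "pos S ` S = {..<card S}" using sub by (intro card_subset_eq) auto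
  then show ?thesis using inj unfolding bij_betw_def by simp
qed

lemma wt_ii: "tri a = tri b \<Longrightarrow> tri v \<noteq> tri a \<Longrightarrow> wt {a,b,v} = 3"
  unfolding wt_def by (simp add: insert_commute)

lemma wt_iii: "tri a \<noteq> tri b \<Longrightarrow> tri v \<noteq> tri a \<Longrightarrow> tri v \<noteq> tri b \<Longrightarrow> wt {a,b,v} = 4"
  unfolding wt_def by (simp add: insert_commute)

lemma Dl_disj: "g \<noteq> h \<Longrightarrow> Dl g \<inter> Dl h = {}"
  by (auto simp: mem_Dl)

lemma card_S:
  assumes "1 \<le> a" "1 \<le> b" "1 \<le> v" "a \<noteq> b" "v \<noteq> a" "v \<noteq> b" "tri a \<noteq> tri b"
  shows "card (Dl (tri a) \<union> Dl (tri b) - {a,b,v}) = wt {a,b,v}"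
proof -
  have c6: "card (Dl (tri a) \<union> Dl (tri b)) = 6"
    using card_Un_disjoint[OF fin_Dl fin_Dl Dl_disj[OF assms(7)]] by simp
  show ?thesis
  proof (cases "tri v = tri a \<or> tri v = tri b")
    case True
    have sub: "{a,b,v} \<subseteq> Dl (tri a) \<union> Dl (tri b)" using True assms by (auto simp: mem_Dl)
    have "card (Dl (tri a) \<union> Dl (tri b) - {a,b,v}) = 3"
      using card_Diff_subset[OF _ sub] c6 assms by simp
    moreover have "wt {a,b,v} = 3"
      using True assms wt_ii[of b v a] wt_ii[of a v b] by (auto simp: insert_commute)
    ultimately show ?thesis by simp
  next
    case False
    have eq: "Dl (tri a) \<union> Dl (tri b) - {a,b,v} = Dl (tri a) \<union> Dl (tri b) - {a,b}"
      using False by (auto simp: mem_Dl)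
    have sub: "{a,b} \<subseteq> Dl (tri a) \<union> Dl (tri b)" using assms by (auto simp: mem_Dl)
    have "card (Dl (tri a) \<union> Dl (tri b) - {a,b}) = 4"
      using card_Diff_subset[OF _ sub] c6 assms by simp
    then show ?thesis using eq wt_iii[of a b v] False assms by simp
  qed
qed

definition Lset :: "nat \<Rightarrow> (nat set \<times> nat) set" where
  "Lset m = {(T,i). T \<subseteq> UU m \<and> card T = 3 \<and> i < wt T}"
definition Tr1 :: "nat \<Rightarrow> (nat \<times> nat \<times> nat) set" where
  "Tr1 k = {(a,b,i). a < b \<and> {a,b} = Dl (tri k) - {k} \<and> i < 3}"
definition Tr2 :: "nat \<Rightarrow> nat \<Rightarrow> (nat \<times> nat \<times> nat) set" where
  "Tr2 m k = {(a,b,i). i = 0 \<and> a < b \<and> a \<in> UU m \<and> b \<in> UU m \<and> tri a \<noteq> tri b \<and>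
      k \<in> Dl (tri a) \<union> Dl (tri b) - {a,b}}"
definition Trs :: "nat \<Rightarrow> nat \<Rightarrow> (nat \<times> nat \<times> nat) set" where
  "Trs m k = Tr1 k \<union> Tr2 m k"
definition srv :: "nat \<Rightarrow> nat \<Rightarrow> nat \<times> nat \<times> nat \<Rightarrow> nat set" where
  "srv m k \<tau> = (case \<tau> of (a,b,i) \<Rightarrow> UU m - {a,b,k})"
definition pkt :: "nat \<Rightarrow> nat \<times> nat \<times> nat \<Rightarrow> nat \<Rightarrow> nat set \<times> nat" where
  "pkt k \<tau> v = (case \<tau> of (a,b,i) \<Rightarrow>
     ({a,b,v}, if tri a = tri b then i else pos (Dl (tri a) \<union> Dl (tri b) - {a,b,v}) k))"

lemma Dl_minus_eq:
  assumes "a < b" "{a,b} = Dl (tri k) - {k}" "1 \<le> k"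
  shows "Dl (tri k) = {a,b,k}" "tri a = tri k" "tri b = tri k" "1 \<le> a" "1 \<le> b" "a \<noteq> k" "b \<noteq> k"
proof -
  have "k \<in> Dl (tri k)" using assms(3) by (simp add: mem_Dl)
  then show "Dl (tri k) = {a,b,k}" using assms(2) by auto
  have "a \<in> Dl (tri k)" "b \<in> Dl (tri k)" "a \<noteq> k" "b \<noteq> k" using assms(2) by (auto simp: insert_eq_iff)
  then show "tri a = tri k" "tri b = tri k" "1 \<le> a" "1 \<le> b" "a \<noteq> k" "b \<noteq> k" by (auto simp: mem_Dl)
qed

lemma V_cond:
  assumes k: "k \<in> UU m" and \<tau>: "\<tau> \<in> Trs m k" and v: "v \<in> srv m k \<tau>"
  shows "v \<in> UU m \<and> pkt k \<tau> v \<in> Lset m \<and> v \<in> fst (pkt k \<tau> v) \<and> k \<notin> fst (pkt k \<tau> v) \<and>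
         (\<forall>v'\<in>srv m k \<tau>. v' \<noteq> v \<longrightarrow> v \<notin> fst (pkt k \<tau> v'))"
proof -
  obtain a b i where ab: "\<tau> = (a,b,i)" by (cases \<tau>) auto
  have vU: "v \<in> UU m" and vab: "v \<noteq> a" "v \<noteq> b" "v \<noteq> k" using v ab unfolding srv_def by auto
  have k1: "1 \<le> k" and km: "tri k < m" using k by (auto simp: mem_UU)
  have rest: "(\<forall>v'\<in>srv m k \<tau>. v' \<noteq> v \<longrightarrow> v \<notin> fst (pkt k \<tau> v'))"
    using vab ab unfolding srv_def pkt_def by auto
  show ?thesis
  proof (cases "\<tau> \<in> Tr1 k")
    case True
    then have ab1: "a < b" "{a,b} = Dl (tri k) - {k}" "i < 3" using ab unfolding Tr1_def by auto
    note D = Dl_minus_eq[OF ab1(1,2) k1]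
    have tv: "tri v \<noteq> tri k"
    proof
      assume "tri v = tri k"
      then have "v \<in> Dl (tri k)" using vU by (simp add: mem_Dl mem_UU)
      then show False using D(1) vab by auto
    qed
    have pk: "pkt k \<tau> v = ({a,b,v}, i)" using ab D unfolding pkt_def by simp
    have "{a,b,v} \<subseteq> UU m" using D vU km by (auto simp: mem_UU)
    moreover have "card {a,b,v} = 3" using D ab1 vab by auto
    moreover have "wt {a,b,v} = 3" using wt_ii[of a b v] D tv by simp
    ultimately have "pkt k \<tau> v \<in> Lset m" using pk ab1 unfolding Lset_def by simp
    then show ?thesis using pk vU vab rest D by auto
  next
    case False
    then have "\<tau> \<in> Tr2 m k" using \<tau> unfolding Trs_def by simp
    then have ab2: "i = 0" "a < b" "a \<in> UU m" "b \<in> UU m" "tri a \<noteq> tri b"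
      "k \<in> Dl (tri a) \<union> Dl (tri b) - {a,b}" using ab unfolding Tr2_def by auto
    define S where "S = Dl (tri a) \<union> Dl (tri b) - {a,b,v}"
    have pk: "pkt k \<tau> v = ({a,b,v}, pos S k)" using ab ab2 unfolding pkt_def S_def by simp
    have a1: "1 \<le> a" "1 \<le> b" "1 \<le> v" using ab2 vU by (auto simp: mem_UU)
    have cS: "card S = wt {a,b,v}" unfolding S_def
      by (rule card_S) (use a1 ab2 vab in auto)
    have kS: "k \<in> S" using ab2 vab unfolding S_def by auto
    have "pos S k < card S" using bij_betw_apply[OF pos_bij kS] unfolding S_def by simp
    then have "pos S k < wt {a,b,v}" using cS by simp
    moreover have "{a,b,v} \<subseteq> UU m" using ab2 vU by auto
    moreover have "card {a,b,v} = 3" using ab2 vab by auto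
    ultimately have "pkt k \<tau> v \<in> Lset m" using pk unfolding Lset_def by simp
    then show ?thesis using pk vU vab rest ab2 by auto
  qed
qed

lemma card2_ord: assumes "card S = (2::nat)" obtains a b :: nat where "S = {a,b}" "a < b"
proof -
  obtain x y where "S = {x,y}" "x \<noteq> y" using assms card_2_iff by metis
  then show ?thesis using that[of x y] that[of y x] by (metis insert_commute linorder_neqE_nat)
qed

lemma C_cond:
  assumes v: "v \<in> UU m" and p: "p \<in> Lset m" and vp: "v \<in> fst p"
  shows "\<exists>k\<in>UU m. \<exists>\<tau>\<in>Trs m k. v \<in> srv m k \<tau> \<and> pkt k \<tau> v = p"
proof -
  obtain T i where pTi: "p = (T,i)" by (cases p) auto
  have T: "T \<subseteq> UU m" "card T = 3" "i < wt T" using p pTi unfolding Lset_def by auto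
  have vT: "v \<in> T" using vp pTi by simp
  have finT: "finite T" by (rule finite_subset[OF T(1)]) simp
  have "card (T - {v}) = 2" using T(2) vT finT by simp
  then obtain a b where ab: "T - {v} = {a,b}" "a < b" by (rule card2_ord)
  have Teq: "T = {a,b,v}" using ab(1) vT by auto
  have vab: "v \<noteq> a" "v \<noteq> b" using ab(1) by auto
  have aU: "a \<in> UU m" "b \<in> UU m" using T(1) Teq by auto
  then have a1: "1 \<le> a" "1 \<le> b" "tri a < m" "tri b < m" by (auto simp: mem_UU)
  have v1: "1 \<le> v" using v by (simp add: mem_UU)
  show ?thesis
  proof (cases "tri a = tri b")
    case True
    have tv: "tri v \<noteq> tri a"
    proof
      assume "tri v = tri a"
      then have "tri ` T = {tri a}" using Teq True by auto
      then show False using T(3) unfolding wt_def by simp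
    qed
    have abD: "{a,b} \<subseteq> Dl (tri a)" using True a1 by (auto simp: mem_Dl)
    have "card (Dl (tri a) - {a,b}) = 1" using card_Diff_subset[OF _ abD] ab by simp
    then obtain k where k: "Dl (tri a) - {a,b} = {k}" by (rule card_1_singletonE)
    have kD: "k \<in> Dl (tri a)" "k \<noteq> a" "k \<noteq> b" using k by auto
    then have k1: "1 \<le> k" "tri k = tri a" by (auto simp: mem_Dl)
    have Deq: "Dl (tri a) = {a,b,k}" using k abD by auto
    have Dk: "Dl (tri k) - {k} = {a,b}" using Deq k1 kD by auto
    have kU: "k \<in> UU m" using k1 a1 by (simp add: mem_UU)
    have "wt T = 3" using Teq wt_ii[of a b v] True tv by simp
    then have \<tau>: "(a,b,i) \<in> Trs m k" using T(3) Dk ab unfolding Trs_def Tr1_def by auto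
    have "v \<noteq> k" using tv k1 by auto
    then have "v \<in> srv m k (a,b,i)" using v vab unfolding srv_def by auto
    moreover have "pkt k (a,b,i) v = p" using True Teq pTi unfolding pkt_def by simp
    ultimately show ?thesis using kU \<tau> by blast
  next
    case False
    define S where "S = Dl (tri a) \<union> Dl (tri b) - {a,b,v}"
    have cS: "card S = wt T" unfolding S_def Teq
      by (rule card_S) (use a1 v1 ab vab False in auto)
    have "i \<in> pos S ` S" using bij_betw_imp_surj_on[OF pos_bij[of S]] cS T(3) unfolding S_def by auto
    then obtain k where kS: "k \<in> S" "pos S k = i" by auto
    have kD: "k \<in> Dl (tri a) \<union> Dl (tri b) - {a,b}" "k \<noteq> v" using kS unfolding S_def by auto
    have kU: "k \<in> UU m" using kD(1) Dl_sub[of "tri a" m] Dl_sub[of "tri b" m] a1 by auto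
    have \<tau>: "(a,b,0) \<in> Trs m k" using ab aU False kD unfolding Trs_def Tr2_def by auto
    have "v \<in> srv m k (a,b,0)" using v vab kD unfolding srv_def by auto
    moreover have "pkt k (a,b,0) v = p" using False Teq pTi kS unfolding pkt_def S_def by simp
    ultimately show ?thesis using kU \<tau> by blast
  qed
qed

lemma Trf:
  assumes k: "k \<in> UU m"
  shows "finite (Trs m k) \<and> card (Trs m k) \<le> 6*m - 3"
proof -
  have k1: "1 \<le> k" "tri k < m" using k by (auto simp: mem_UU)
  define D where "D = Dl (tri k) - {k}"
  have kD: "k \<in> Dl (tri k)" using k1 by (simp add: mem_Dl)
  have cD: "card D = 2" unfolding D_def using kD by simp
  have s1: "Tr1 k \<subseteq> (\<lambda>i. (Min D, Max D, i)) ` {..<3}"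
  proof
    fix x assume "x \<in> Tr1 k"
    then obtain a b i where x: "x = (a,b,i)" "a < b" "{a,b} = D" "i < 3"
      unfolding Tr1_def D_def by auto
    have "Min D = a" "Max D = b" using x by (auto simp: x(3)[symmetric])
    then show "x \<in> (\<lambda>i. (Min D, Max D, i)) ` {..<3}" using x by auto
  qed
  have s2: "Tr2 m k \<subseteq> (\<lambda>(x,y). (min x y, max x y, 0)) ` (D \<times> (UU m - Dl (tri k)))"
  proof
    fix x assume "x \<in> Tr2 m k"
    then obtain a b i where x: "x = (a,b,i)" "i = 0" "a < b" "a \<in> UU m" "b \<in> UU m" "tri a \<noteq> tri b"
      "k \<in> Dl (tri a) \<union> Dl (tri b) - {a,b}" unfolding Tr2_def by auto
    have a1: "1 \<le> a" "1 \<le> b" using x by (auto simp: mem_UU)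
    show "x \<in> (\<lambda>(x,y). (min x y, max x y, 0)) ` (D \<times> (UU m - Dl (tri k)))"
    proof (cases "k \<in> Dl (tri a)")
      case True
      then have "tri k = tri a" by (simp add: mem_Dl)
      then have "(a,b) \<in> D \<times> (UU m - Dl (tri k))" using x a1 unfolding D_def by (auto simp: mem_Dl)
      then show ?thesis using x by (auto intro!: image_eqI[where x="(a,b)"])
    next
      case False
      then have "tri k = tri b" using x by (auto simp: mem_Dl)
      then have "(b,a) \<in> D \<times> (UU m - Dl (tri k))" using x a1 unfolding D_def by (auto simp: mem_Dl)
      then show ?thesis using x by (auto intro!: image_eqI[where x="(b,a)"])
    qed
  qed
  have f1: "finite (Tr1 k)" by (rule finite_subset[OF s1]) simp
  have c1: "card (Tr1 k) \<le> 3" using card_mono[OF _ s1] card_image_le[of "{..<3::nat}" "\<lambda>i. (Min D, Max D, i)"]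
    by simp
  have fD: "finite (D \<times> (UU m - Dl (tri k)))" unfolding D_def by simp
  have f2: "finite (Tr2 m k)" by (rule finite_subset[OF s2]) (use fD in simp)
  have "card (Tr2 m k) \<le> card (D \<times> (UU m - Dl (tri k)))"
    using card_mono[OF finite_imageI[OF fD] s2] card_image_le[OF fD, of "\<lambda>(x,y). (min x y, max x y, 0::nat)"]
    by linarith
  also have "\<dots> = 2 * (3*m - 3)" using cD card_UU_Dl[OF k1(2)] by (simp add: card_cartesian_product)
  finally have c2: "card (Tr2 m k) \<le> 2 * (3*m - 3)" .
  have "card (Trs m k) \<le> card (Tr1 k) + card (Tr2 m k)" unfolding Trs_def by (rule card_Un_le)
  then have "card (Trs m k) \<le> 3 + 2 * (3*m - 3)" using c1 c2 by linarith
  moreover have "3 + 2 * (3*m - 3) = 6*m - 3" using k1 by simp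
  ultimately show ?thesis using f1 f2 unfolding Trs_def by simp
qed

lemma tri_img_Dl_minus: "tri ` (Dl g - {z}) = {g}"
proof -
  have "card (Dl g - {z}) \<ge> 2" by (cases "z \<in> Dl g") auto
  then have "Dl g - {z} \<noteq> {}" by (metis card.empty not_numeral_le_zero)
  moreover have "\<forall>x\<in>Dl g - {z}. tri x = g" by (auto simp: mem_Dl)
  ultimately show ?thesis by auto
qed

lemma fB_props:
  assumes k: "k \<in> UU m" and z: "z \<in> UU m - Dl (tri k)"
  shows "insert k (Dl (tri z) - {z}) \<subseteq> UU m" "card (insert k (Dl (tri z) - {z})) = 3"
        "wt (insert k (Dl (tri z) - {z})) = 3" "k \<notin> Dl (tri z) - {z}"
proof -
  have z1: "1 \<le> z" "tri z < m" "tri z \<noteq> tri k" using z k by (auto simp: mem_UU mem_Dl)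
  have k1: "1 \<le> k" using k by (auto simp: mem_UU)
  show kn: "k \<notin> Dl (tri z) - {z}" using z1 by (auto simp: mem_Dl)
  show "insert k (Dl (tri z) - {z}) \<subseteq> UU m" using k Dl_sub[OF z1(2)] by auto
  have zD: "z \<in> Dl (tri z)" using z1 by (simp add: mem_Dl)
  show "card (insert k (Dl (tri z) - {z})) = 3" using kn zD by simp
  have "tri ` insert k (Dl (tri z) - {z}) = {tri k, tri z}" using tri_img_Dl_minus[of "tri z" z] by simp
  then show "wt (insert k (Dl (tri z) - {z})) = 3" unfolding wt_def using z1 by simp
qed

lemma per_user_count:
  assumes k: "k \<in> UU m" and m: "m \<ge> 3"
  shows "card {p \<in> Lset m. k \<in> fst p} = 9 * (m - 1) * (2 * m - 1)"
proof -
  define g0 where "g0 = tri k"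
  have k1: "1 \<le> k" "g0 < m" using k unfolding g0_def by (auto simp: mem_UU)
  have kD: "k \<in> Dl g0" using k1 unfolding g0_def by (simp add: mem_Dl)
  define Ot where "Ot = UU m - Dl g0"
  have memO: "y \<in> Ot \<longleftrightarrow> 1 \<le> y \<and> tri y < m \<and> tri y \<noteq> g0" for y
    unfolding Ot_def by (auto simp: mem_UU mem_Dl)
  define DA where "DA = (Dl g0 - {k}) \<times> Ot \<times> {..<3::nat}"
  define DB where "DB = Ot \<times> {..<3::nat}"
  define DC where "DC = Sigma Ot (\<lambda>x. (Ot - Dl (tri x)) \<times> {..<2::nat})"
  define fA :: "nat \<times> nat \<times> nat \<Rightarrow> nat set \<times> nat" where "fA = (\<lambda>(x,y,i). ({k,x,y}, i))"
  define fB :: "nat \<times> nat \<Rightarrow> nat set \<times> nat" where "fB = (\<lambda>(z,i). (insert k (Dl (tri z) - {z}), i))"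
  define fC :: "nat \<times> nat \<times> nat \<Rightarrow> nat set \<times> nat" where "fC = (\<lambda>(x,(y,j)). ({k,x,y}, (if x < y then 2 else 0) + j))"
  define P where "P = {p \<in> Lset m. k \<in> fst p}"
  have memDl0: "x \<in> Dl g0 \<longleftrightarrow> 1 \<le> x \<and> tri x = g0" for x by (simp add: mem_Dl)
  have D0U: "Dl g0 \<subseteq> UU m" using Dl_sub k1 by simp
  have A_sub: "fA ` DA \<subseteq> P"
  proof
    fix p assume "p \<in> fA ` DA"
    then obtain x y i where xy: "p = ({k,x,y}, i)" "x \<in> Dl g0" "x \<noteq> k" "y \<in> Ot" "i < 3"
      unfolding fA_def DA_def by auto
    have ty: "tri y \<noteq> g0" "1 \<le> y" using xy memO by auto
    have tx: "tri x = g0" using xy memDl0 by auto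
    have "{k,x,y} \<subseteq> UU m" using xy D0U kD unfolding Ot_def by auto
    moreover have "y \<noteq> k" "y \<noteq> x" using ty tx g0_def by auto
    then have "card {k,x,y} = 3" using xy by auto
    moreover have "wt {k,x,y} = 3" using wt_ii[of k x y] tx ty g0_def by simp
    ultimately show "p \<in> P" using xy unfolding P_def Lset_def by auto
  qed
  have B_sub: "fB ` DB \<subseteq> P"
  proof
    fix p assume "p \<in> fB ` DB"
    then obtain z i where z: "p = (insert k (Dl (tri z) - {z}), i)" "z \<in> Ot" "i < 3"
      unfolding fB_def DB_def by auto
    note F = fB_props[OF k, of z]
    show "p \<in> P" using F z unfolding P_def Lset_def Ot_def g0_def by auto
  qed
  have C_sub: "fC ` DC \<subseteq> P"
  proof
    fix p assume "p \<in> fC ` DC"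
    then obtain x y j where xy: "p = ({k,x,y}, (if x < y then 2 else 0) + j)" "x \<in> Ot" "y \<in> Ot"
       "y \<notin> Dl (tri x)" "j < 2"
      unfolding fC_def DC_def by auto
    have t: "tri x \<noteq> g0" "tri y \<noteq> g0" "tri y \<noteq> tri x" "1 \<le> x" "1 \<le> y"
      using xy memO by (auto simp: mem_Dl)
    have "{k,x,y} \<subseteq> UU m" using xy kD D0U unfolding Ot_def by auto
    moreover have "x \<noteq> k" "y \<noteq> k" "y \<noteq> x" using t g0_def by auto
    then have "card {k,x,y} = 3" by auto
    moreover have "wt {k,x,y} = 4" using wt_iii[of k x y] t g0_def by auto
    ultimately show "p \<in> P" using xy unfolding P_def Lset_def by auto
  qed
  have P_sub: "P \<subseteq> fA ` DA \<union> fB ` DB \<union> fC ` DC"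
  proof
    fix p assume "p \<in> P"
    then obtain T i where p: "p = (T,i)" "T \<subseteq> UU m" "card T = 3" "i < wt T" "k \<in> T"
      unfolding P_def Lset_def by auto
    have finT: "finite T" by (rule finite_subset[OF p(2)]) simp
    have "card (T - {k}) = 2" using p finT by simp
    then obtain x y where xy: "T - {k} = {x,y}" "x \<noteq> y" using card_2_iff by metis
    have Teq: "T = {k,x,y}" using xy p(5) by auto
    have xk: "x \<noteq> k" "y \<noteq> k" using xy by auto
    have xU: "x \<in> UU m" "y \<in> UU m" using p(2) Teq by auto
    then have x1: "1 \<le> x" "1 \<le> y" "tri x < m" "tri y < m" by (auto simp: mem_UU)
    have not_all: "\<not> (tri x = g0 \<and> tri y = g0)"
    proof
      assume "tri x = g0 \<and> tri y = g0"
      then have "tri ` T = {g0}" using Teq g0_def by auto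
      then show False using p(4) unfolding wt_def by simp
    qed
    show "p \<in> fA ` DA \<union> fB ` DB \<union> fC ` DC"
    proof (cases "tri x = g0")
      case True
      then have ty: "tri y \<noteq> g0" using not_all by auto
      have "wt T = 3" using Teq wt_ii[of k x y] True ty g0_def by simp
      then have "(x,y,i) \<in> DA" using True ty x1 xk p(4) memO unfolding DA_def by (auto simp: mem_Dl)
      moreover have "p = fA (x,y,i)" using p Teq unfolding fA_def by simp
      ultimately show ?thesis by blast
    next
      case False
      note tx = False
      show ?thesis
      proof (cases "tri y = g0")
        case True
        have "wt T = 3" using Teq wt_ii[of k y x] True tx g0_def by (simp add: insert_commute)
        then have "(y,x,i) \<in> DA" using True tx x1 xk p(4) memO unfolding DA_def by (auto simp: mem_Dl)
        moreover have "p = fA (y,x,i)" using p Teq unfolding fA_def by (simp add: insert_commute)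
        ultimately show ?thesis by blast
      next
        case False
        note ty = False
        show ?thesis
        proof (cases "tri x = tri y")
          case True
          have xyD: "{x,y} \<subseteq> Dl (tri x)" using True x1 by (auto simp: mem_Dl)
          have "card (Dl (tri x) - {x,y}) = 1" using card_Diff_subset[OF _ xyD] xy by simp
          then obtain z where z: "Dl (tri x) - {x,y} = {z}" by (rule card_1_singletonE)
          have zD: "z \<in> Dl (tri x)" "z \<noteq> x" "z \<noteq> y" using z by auto
          then have z1: "1 \<le> z" "tri z = tri x" by (auto simp: mem_Dl)
          have "Dl (tri z) - {z} = {x,y}" using z z1 xyD zD by auto
          then have Teq2: "T = insert k (Dl (tri z) - {z})" using Teq by simp
          have "wt T = 3" using Teq wt_ii[of x y k] True tx g0_def by (simp add: insert_commute)
          then have "(z,i) \<in> DB" using z1 tx x1 p(4) memO unfolding DB_def by auto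
          moreover have "p = fB (z,i)" using p Teq2 unfolding fB_def by simp
          ultimately show ?thesis by blast
        next
          case False
          have w4: "wt T = 4" using Teq wt_iii[of k x y] False tx ty g0_def by auto
          have xO: "x \<in> Ot" "y \<in> Ot" using x1 tx ty memO by auto
          have yx: "y \<notin> Dl (tri x)" "x \<notin> Dl (tri y)" using False by (auto simp: mem_Dl)
          have "\<exists>x' y' j. (x', (y', j)) \<in> DC \<and> p = fC (x', (y', j))"
          proof (cases "(2 \<le> i) = (x < y)")
            case True
            have "(x, (y, i mod 2)) \<in> DC" using xO yx unfolding DC_def by auto
            moreover have "p = fC (x, (y, i mod 2))" using p Teq True w4 unfolding fC_def by (auto; presburger)
            ultimately show ?thesis by blast
          next
            case False
            have "(y, (x, i mod 2)) \<in> DC" using xO yx unfolding DC_def by auto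
            moreover have "p = fC (y, (x, i mod 2))"
              using p Teq False w4 xy(2) unfolding fC_def by (auto simp: insert_commute; presburger)
            ultimately show ?thesis by blast
          qed
          then show ?thesis by blast
        qed
      qed
    qed
  qed
  have Peq: "P = fA ` DA \<union> fB ` DB \<union> fC ` DC"
    by (rule subset_antisym[OF P_sub]) (intro Un_least A_sub B_sub C_sub)
  have injA: "inj_on fA DA"
  proof (rule inj_onI)
    fix u u' assume u: "u \<in> DA" "u' \<in> DA" "fA u = fA u'"
    obtain x y i where uu: "u = (x,y,i)" by (cases u) auto
    obtain x' y' i' where uu': "u' = (x',y',i')" by (cases u') auto
    have h: "{k,x,y} = {k,x',y'}" "i = i'" using u uu uu' unfolding fA_def by auto
    have d: "x \<in> Dl g0" "x \<noteq> k" "y \<in> Ot" "x' \<in> Dl g0" "x' \<noteq> k" "y' \<in> Ot"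
      using u(1,2) unfolding uu uu' DA_def by auto
    have t: "tri x = g0" "tri x' = g0" "x \<noteq> k" "x' \<noteq> k" "tri y \<noteq> g0" "tri y' \<noteq> g0"
      using d memO memDl0 by auto
    have "y \<noteq> k" "y' \<noteq> k" using t kD memDl0 by auto
    note t = t this
    have "x \<in> {k,x',y'}" using h by blast
    then have "x = x'" using t by auto
    have "y \<in> {k,x',y'}" using h by blast
    then have "y = y'" using t by auto
    show "u = u'" using uu uu' h \<open>x = x'\<close> \<open>y = y'\<close> by simp
  qed
  have injB: "inj_on fB DB"
  proof (rule inj_onI)
    fix u u' assume u: "u \<in> DB" "u' \<in> DB" "fB u = fB u'"
    obtain z i where uu: "u = (z,i)" by (cases u) auto
    obtain z' i' where uu': "u' = (z',i')" by (cases u') auto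
    have zO: "z \<in> UU m - Dl (tri k)" "z' \<in> UU m - Dl (tri k)" using u uu uu' unfolding DB_def Ot_def g0_def by auto
    have h: "insert k (Dl (tri z) - {z}) = insert k (Dl (tri z') - {z'})" "i = i'"
      using u uu uu' unfolding fB_def by auto
    have h2: "Dl (tri z) - {z} = Dl (tri z') - {z'}"
      using h(1) fB_props(4)[OF k zO(1)] fB_props(4)[OF k zO(2)] by (metis insert_ident)
    then have "tri ` (Dl (tri z) - {z}) = tri ` (Dl (tri z') - {z'})" by simp
    then have tz: "tri z = tri z'" using tri_img_Dl_minus by simp
    have z1: "1 \<le> z" "1 \<le> z'" using zO by (auto simp: mem_UU)
    have "z' \<in> Dl (tri z)" using tz z1 by (simp add: mem_Dl)
    then have "z = z'" using h2 tz by blast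
    then show "u = u'" using uu uu' h by simp
  qed
  have injC: "inj_on fC DC"
  proof (rule inj_onI)
    fix u u' assume u: "u \<in> DC" "u' \<in> DC" "fC u = fC u'"
    obtain x y j where uu: "u = (x,(y,j))" by (cases u) auto
    obtain x' y' j' where uu': "u' = (x',(y',j'))" by (cases u') auto
    have d: "x \<in> Ot" "y \<in> Ot" "y \<notin> Dl (tri x)" "j < 2" "x' \<in> Ot" "y' \<in> Ot" "y' \<notin> Dl (tri x')" "j' < 2"
      using u uu uu' unfolding DC_def by auto
    have t0: "x \<noteq> k" "y \<noteq> k" "x' \<noteq> k" "y' \<noteq> k"
      using d(1,2,5,6) kD unfolding Ot_def by auto
    have "x \<in> Dl (tri x)" "x' \<in> Dl (tri x')" using d(1,5) memO self_Dl by auto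
    then have "x \<noteq> y" "x' \<noteq> y'" using d(3,7) by auto
    note t = t0 this
    have h: "{k,x,y} = {k,x',y'}" "(if x < y then 2 else 0) + j = (if x' < y' then 2 else 0) + (j'::nat)"
      using u uu uu' unfolding fC_def by auto
    have hj: "(x < y) = (x' < y')" "j = j'" using h(2) d by (auto split: if_splits)
    have "{x,y} = {x',y'}" using h(1) t by (auto simp: insert_eq_iff)
    then have "x = x' \<and> y = y'" using hj t by (auto simp: doubleton_eq_iff)
    then show "u = u'" using uu uu' hj by simp
  qed
  have dAB: "fA ` DA \<inter> fB ` DB = {}"
  proof (rule ccontr)
    assume "fA ` DA \<inter> fB ` DB \<noteq> {}"
    then obtain u u' where a0: "u \<in> DA" "u' \<in> DB" "fA u = fB u'" by blast
    obtain x y i where "u = (x,y,i)" by (cases u) auto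
    moreover obtain z i' where "u' = (z,i')" by (cases u') auto
    ultimately have a: "(x,y,i) \<in> DA" "(z,i') \<in> DB" "fA (x,y,i) = fB (z,i')" using a0 by auto
    have "{k,x,y} = insert k (Dl (tri z) - {z})" using a(3) unfolding fA_def fB_def by simp
    moreover have "x \<noteq> k" "tri x = g0" using a(1) unfolding DA_def by (auto simp: mem_Dl)
    ultimately have "x \<in> Dl (tri z)" by blast
    then have "tri z = g0" using \<open>tri x = g0\<close> by (simp add: mem_Dl)
    then show False using a(2) memO unfolding DB_def by auto
  qed
  have dAC: "fA ` DA \<inter> fC ` DC = {}"
  proof (rule ccontr)
    assume "fA ` DA \<inter> fC ` DC \<noteq> {}"
    then obtain u u' where a0: "u \<in> DA" "u' \<in> DC" "fA u = fC u'" by blast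
    obtain x y i where "u = (x,y,i)" by (cases u) auto
    moreover obtain x' y' j where "u' = (x',(y',j))" by (cases u') auto
    ultimately have a: "(x,y,i) \<in> DA" "(x',(y',j)) \<in> DC" "fA (x,y,i) = fC (x',(y',j))" using a0 by auto
    have "{k,x,y} = {k,x',y'}" using a(3) unfolding fA_def fC_def by simp
    moreover have "x \<noteq> k" "tri x = g0" using a(1) unfolding DA_def by (auto simp: mem_Dl)
    moreover have "tri x' \<noteq> g0" "tri y' \<noteq> g0" using a(2) memO unfolding DC_def by auto
    ultimately show False by blast
  qed
  have dBC: "fB ` DB \<inter> fC ` DC = {}"
  proof (rule ccontr)
    assume "fB ` DB \<inter> fC ` DC \<noteq> {}"
    then obtain u u' where a0: "u \<in> DB" "u' \<in> DC" "fB u = fC u'" by blast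
    obtain z i where "u = (z,i)" by (cases u) auto
    moreover obtain x' y' j where "u' = (x',(y',j))" by (cases u') auto
    ultimately have a: "(z,i) \<in> DB" "(x',(y',j)) \<in> DC" "fB (z,i) = fC (x',(y',j))" using a0 by auto
    have e: "insert k (Dl (tri z) - {z}) = {k,x',y'}" using a(3) unfolding fB_def fC_def by simp
    have zO: "z \<in> UU m - Dl (tri k)" using a(1) unfolding DB_def Ot_def g0_def by auto
    have d: "x' \<noteq> k" "y' \<noteq> k" "y' \<notin> Dl (tri x')" "1 \<le> x'" "1 \<le> y'"
      using a(2) kD memO unfolding DC_def Ot_def by (auto simp: mem_Dl)
    have "x' \<in> Dl (tri z)" "y' \<in> Dl (tri z)" using e d by blast+
    then show False using d by (auto simp: mem_Dl)
  qed
  have cO: "card Ot = 3*m - 3" unfolding Ot_def by (rule card_UU_Dl[OF k1(2)])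
  have fO: "finite Ot" unfolding Ot_def by simp
  have cA: "card DA = 2 * (3*m - 3) * 3" unfolding DA_def using kD cO by (simp add: card_cartesian_product)
  have cB: "card DB = (3*m - 3) * 3" unfolding DB_def using cO by (simp add: card_cartesian_product)
  have cOx: "card ((Ot - Dl (tri x)) \<times> {..<2::nat}) = (3*m - 6) * 2" if x: "x \<in> Ot" for x
  proof -
    have xo: "1 \<le> x" "tri x < m" "tri x \<noteq> g0" using x memO by auto
    have "Dl (tri x) \<subseteq> Ot"
    proof
      fix z assume "z \<in> Dl (tri x)"
      then have "1 \<le> z" "tri z = tri x" by (auto simp: mem_Dl)
      then show "z \<in> Ot" using xo memO by simp
    qed
    then have "card (Ot - Dl (tri x)) = 3*m - 6" using card_Diff_subset[of "Dl (tri x)" Ot] cO by simp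
    then show ?thesis by (simp add: card_cartesian_product)
  qed
  have cC: "card DC = (3*m - 3) * ((3*m - 6) * 2)"
    unfolding DC_def using card_SigmaI[OF fO, of "\<lambda>x. (Ot - Dl (tri x)) \<times> {..<2::nat}"] cOx fO cO
    by simp
  have fDA: "finite DA" "finite DB" "finite DC" unfolding DA_def DB_def DC_def using fO by auto
  have "card P = card (fA ` DA) + card (fB ` DB) + card (fC ` DC)"
    unfolding Peq using dAB dAC dBC fDA
    by (subst card_Un_disjoint) (auto simp: card_Un_disjoint)
  also have "\<dots> = card DA + card DB + card DC"
    using card_image[OF injA] card_image[OF injB] card_image[OF injC] by simp
  also have "\<dots> = 9 * (m - 1) * (2 * m - 1)"
  proof -
    obtain n where n: "m = n + 3" using m by (metis add.commute le_Suc_ex)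
    show ?thesis unfolding cA cB cC n by (simp add: algebra_simps)
  qed
  finally show ?thesis unfolding P_def .
qed

lemma double_count:
  assumes "finite L" "finite U" "\<And>p. p \<in> L \<Longrightarrow> fst p \<subseteq> U \<and> card (fst p) = 3"
  shows "(\<Sum>k\<in>U. card {p\<in>L. k \<in> fst p}) = 3 * card L"
proof -
  have "(\<Sum>k\<in>U. card {p\<in>L. k \<in> fst p}) = (\<Sum>k\<in>U. \<Sum>p\<in>L. if k \<in> fst p then 1 else 0)"
    using assms(1) by (simp add: sum.inter_filter[symmetric])
  also have "\<dots> = (\<Sum>p\<in>L. \<Sum>k\<in>U. if k \<in> fst p then 1 else 0)" by (rule sum.swap)
  also have "\<dots> = (\<Sum>p\<in>L. card {k\<in>U. k \<in> fst p})"
    using assms(2) by (simp add: sum.inter_filter[symmetric])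
  also have "\<dots> = (\<Sum>p\<in>L. 3)"
  proof (rule sum.cong[OF refl])
    fix p assume "p \<in> L"
    then have h: "fst p \<subseteq> U" "card (fst p) = 3" using assms(3) by auto
    then have "{k\<in>U. k \<in> fst p} = fst p" "card (fst p) = 3" by auto
    then show "card {k\<in>U. k \<in> fst p} = 3" by simp
  qed
  finally show ?thesis by simp
qed

lemma card_Lset:
  assumes m: "m \<ge> 3"
  shows "finite (Lset m)" "card (Lset m) = 9 * m * (m - 1) * (2 * m - 1)"
proof -
  have "Lset m \<subseteq> Pow (UU m) \<times> {..<5}" unfolding Lset_def wt_def by (auto split: if_splits)
  then show fin: "finite (Lset m)" by (rule finite_subset) simp
  have "3 * card (Lset m) = (\<Sum>k\<in>UU m. card {p\<in>Lset m. k \<in> fst p})"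
    by (rule double_count[symmetric]) (use fin in \<open>auto simp: Lset_def\<close>)
  also have "\<dots> = (\<Sum>k\<in>UU m. 9 * (m - 1) * (2 * m - 1))"
    by (rule sum.cong[OF refl]) (rule per_user_count[OF _ m])
  also have "\<dots> = 3 * (9 * m * (m - 1) * (2 * m - 1))" by simp
  finally show "card (Lset m) = 9 * m * (m - 1) * (2 * m - 1)" by simp
qed

theorem mainTheorem7:
  fixes m N K :: nat and M :: real
  assumes "m \<ge> 3" and "K = 3 * m" and "N \<ge> 1"
    and "0 < M" and "M \<le> real N"
    and "real K * M / real N = real K - 3"
  shows "achievable_with_subpacketization N K M (real N / M - 1) (9 * m * (m - 1) * (2 * m - 1))"
proof -
  define F where "F = 9 * m * (m - 1) * (2 * m - 1)"
  have m: "m \<ge> 3" using assms by simp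
  obtain n where n: "m = n + 3" using m by (metis add.commute le_Suc_ex)
  have F1: "F \<ge> 1" unfolding F_def n by simp
  obtain e where e: "bij_betw e (Lset m) {1..F}"
    using finite_same_card_bij[OF card_Lset(1)[OF m], of "{1..F}"] card_Lset(2)[OF m] unfolding F_def by auto
  have KU: "{1..K} = UU m" unfolding UU_def using assms(2) by simp
  have Nr: "real N > 0" using assms(3) by simp
  have Meq: "M = real N * (real K - 3) / real K"
    using assms(6) Nr assms(2) m by (simp add: field_simps)
  have mr: "real m \<ge> 3" using m by simp
  have "d2d_scheme N K M F b (real N / M - 1)" for b
  proof (rule generic_scheme[where L="Lset m" and miss=fst and e=e and Tr="Trs m" and srv="srv m"
        and pk=pkt and lk="6*m - 3"])
    show "inj_on e (Lset m)" using e by (simp add: bij_betw_def)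
    show "e ` Lset m \<subseteq> {1..F}" using e by (simp add: bij_betw_def)
    show "\<And>k. k \<in> {1..K} \<Longrightarrow> finite (Trs m k) \<and> card (Trs m k) \<le> 6 * m - 3"
      using Trf KU by blast
    show "\<And>k \<tau> v. k \<in> {1..K} \<Longrightarrow> \<tau> \<in> Trs m k \<Longrightarrow> v \<in> srv m k \<tau> \<Longrightarrow>
              v \<in> {1..K} \<and> pkt k \<tau> v \<in> Lset m \<and> v \<in> fst (pkt k \<tau> v) \<and> k \<notin> fst (pkt k \<tau> v) \<and>
              (\<forall>v'\<in>srv m k \<tau>. v' \<noteq> v \<longrightarrow> v \<notin> fst (pkt k \<tau> v'))"
      unfolding KU by (rule V_cond)
    show "\<And>v p. v \<in> {1..K} \<Longrightarrow> p \<in> Lset m \<Longrightarrow> v \<in> fst p \<Longrightarrow>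
              \<exists>k\<in>{1..K}. \<exists>\<tau>\<in>Trs m k. v \<in> srv m k \<tau> \<and> pkt k \<tau> v = p"
      unfolding KU by (rule C_cond)
    show "real N * (real F - real (card {p\<in>Lset m. k \<in> fst p})) \<le> M * real F" if k: "k \<in> {1..K}" for k
    proof -
      have c: "card {p\<in>Lset m. k \<in> fst p} = 9 * (m - 1) * (2 * m - 1)"
        using per_user_count[OF _ m] k KU by blast
      have r1: "real (m - 1) = real m - 1" "real (2*m - 1) = 2 * real m - 1" using m by auto
      have "real N * (real F - real (card {p\<in>Lset m. k \<in> fst p}))
            = real N * (9 * real m * (real m - 1) * (2 * real m - 1) - 9 * (real m - 1) * (2 * real m - 1))"
        unfolding c F_def using r1 by simp
      also have "\<dots> = M * real F"
        unfolding Meq F_def assms(2) using r1 mr by (simp add: field_simps)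
      finally show ?thesis by simp
    qed
    show "real N / M - 1 = real (K * (6 * m - 3)) / real F"
    proof -
      have r1: "real (m - 1) = real m - 1" "real (2*m - 1) = 2 * real m - 1" "real (6*m - 3) = 6 * real m - 3"
        using m by auto
      have "real N / M - 1 = 1 / (real m - 1)"
        unfolding Meq assms(2) using Nr mr by (simp add: field_simps)
      also have "\<dots> = real (K * (6 * m - 3)) / real F"
      proof -
        define a where "a = 9 * real m * (2 * real m - 1)"
        have a0: "a \<noteq> 0" unfolding a_def using mr by simp
        have "real F = (real m - 1) * a" unfolding F_def a_def using r1 by simp
        moreover have "real (K * (6 * m - 3)) = a" unfolding a_def assms(2) using r1 by (simp add: algebra_simps)
        ultimately have "real (K * (6 * m - 3)) / real F = a / ((real m - 1) * a)" by (simp only:)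
        then show ?thesis using a0 by simp
      qed
      finally show ?thesis .
    qed
    show "N \<ge> 1" using assms(3) .
  qed
  then show ?thesis unfolding achievable_with_subpacketization_def F_def[symmetric] using F1 by simp
qed

end
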